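(* Let $X$ be a real Banach lattice equipped with a sufficiently rich topology $\tau$, and let $A$ be a $\tau$-compact, convex, positive-solid subset of $X_+$. Then for every extreme point $a$ of $A$ there exists an order extreme point $b$ of $A$ with $a\le b$.
   Context: A locally convex Hausdorff topology $\tau$ on a Banach lattice $X$ is called sufficiently rich if (i) the space $X^\tau$ of $\tau$-continuous linear functionals on $X$ is a Banach lattice (with lattice operations given by the Riesz–Kantorovich formulas), and (ii) $X_+$ is $\tau$-closed. A set $A\subseteq X_+$ is positive-solid if whenever $x\in X_+$ and $x\le z$ for some $z\in A$, then $x\in A$. A point $b\in A$ is an order extreme point of $A$ if for all $x_0,x_1\in A$ and $t\in(0,1)$, $b\le(1-t)x_0+tx_1$ implies $x_0=b=x_1$. *)

theory Defs
  imports "HOL-Analysis.Analysis"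
begin

text \<open>Banach lattice: a type of sort banach, ordered_real_vector, lattice (a Riesz space
  with a complete norm) whose norm is a lattice norm. Modulus written as sup x (- x).\<close>
definition lattice_norm :: "('a::{real_normed_vector,ordered_real_vector,lattice}) itself \<Rightarrow> bool" where
  "lattice_norm _ \<longleftrightarrow> (\<forall>x y::'a. sup x (- x) \<le> sup y (- y) \<longrightarrow> norm x \<le> norm y)"

definition lc_hausdorff_topology :: "('a::real_vector) topology \<Rightarrow> bool" where
  "lc_hausdorff_topology T \<longleftrightarrow>
     topspace T = UNIV \<and> Hausdorff_space T \<and>
     continuous_map (prod_topology T T) T (\<lambda>(x, y). x + y) \<and>
     continuous_map (prod_topology euclideanreal T) T (\<lambda>(c, x). c *\<^sub>R x) \<and>
     (\<forall>U. openin T U \<and> 0 \<in> U \<longrightarrow> (\<exists>V. openin T V \<and> convex V \<and> 0 \<in> V \<and> V \<subseteq> U))"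

definition tau_dual :: "('a::real_vector) topology \<Rightarrow> ('a \<Rightarrow> real) set" where
  "tau_dual T = {f. linear f \<and> continuous_map T euclideanreal f}"

text \<open>Riesz--Kantorovich sets: (f \<or> g)(x) = sup of rk_set, (f \<and> g)(x) = inf of rk_set, x \<ge> 0.\<close>
definition rk_set :: "('a::{real_vector,ord} \<Rightarrow> real) \<Rightarrow> ('a \<Rightarrow> real) \<Rightarrow> 'a \<Rightarrow> real set" where
  "rk_set f g x = {f y + g (x - y) | y. 0 \<le> y \<and> y \<le> x}"

definition dual_norm :: "('a::real_normed_vector \<Rightarrow> real) \<Rightarrow> real" where
  "dual_norm f = Sup {\<bar>f x\<bar> | x. norm x \<le> 1}"

text \<open>Sufficiently rich topology: locally convex Hausdorff; X^tau is a Banach lattice under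
  the Riesz--Kantorovich lattice operations (closed under RK sup and inf, and complete in the
  dual norm); and X_+ is tau-closed.\<close>
definition sufficiently_rich ::
  "('a::{real_normed_vector,ordered_real_vector,lattice}) topology \<Rightarrow> bool" where
  "sufficiently_rich T \<longleftrightarrow>
     lc_hausdorff_topology T \<and>
     (\<forall>f\<in>tau_dual T. \<forall>g\<in>tau_dual T.
        (\<exists>h\<in>tau_dual T. \<forall>x. 0 \<le> x \<longrightarrow> bdd_above (rk_set f g x) \<and> h x = Sup (rk_set f g x)) \<and>
        (\<exists>h\<in>tau_dual T. \<forall>x. 0 \<le> x \<longrightarrow> bdd_below (rk_set f g x) \<and> h x = Inf (rk_set f g x))) \<and>
     (\<forall>s::nat \<Rightarrow> 'a \<Rightarrow> real. (\<forall>n. s n \<in> tau_dual T) \<and>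
        (\<forall>e>0. \<exists>N. \<forall>m\<ge>N. \<forall>n\<ge>N. dual_norm (\<lambda>x. s m x - s n x) < e) \<longrightarrow>
        (\<exists>f\<in>tau_dual T. (\<lambda>n. dual_norm (\<lambda>x. s n x - f x)) \<longlonglongrightarrow> 0)) \<and>
     closedin T {x. 0 \<le> x}"

definition positive_solid :: "('a::{real_vector,order}) set \<Rightarrow> bool" where
  "positive_solid A \<longleftrightarrow> A \<subseteq> {x. 0 \<le> x} \<and>
     (\<forall>x z. 0 \<le> x \<and> z \<in> A \<and> x \<le> z \<longrightarrow> x \<in> A)"

definition order_extreme_point :: "'a::{real_vector,order} \<Rightarrow> 'a set \<Rightarrow> bool" where
  "order_extreme_point b A \<longleftrightarrow> b \<in> A \<and>
     (\<forall>x0\<in>A. \<forall>x1\<in>A. \<forall>t::real. 0 < t \<and> t < 1 \<and> b \<le> (1 - t) *\<^sub>R x0 + t *\<^sub>R x1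
        \<longrightarrow> x0 = b \<and> x1 = b)"

end

theory Submission
  imports Defs
begin


definition hb_ok :: "('a::real_vector \<Rightarrow> real) \<Rightarrow> 'a \<Rightarrow> ('a \<times> real) set \<Rightarrow> bool" where
  "hb_ok p x0 G \<longleftrightarrow>
     (\<forall>x a b. (x,a)\<in>G \<longrightarrow> (x,b)\<in>G \<longrightarrow> a = b) \<and>
     (\<forall>x a y b. (x,a)\<in>G \<longrightarrow> (y,b)\<in>G \<longrightarrow> (x+y, a+b)\<in>G) \<and>
     (\<forall>x a c. (x,a)\<in>G \<longrightarrow> (c *\<^sub>R x, c*a) \<in> G) \<and>
     (\<forall>x a. (x,a)\<in>G \<longrightarrow> a \<le> p x) \<and>
     (x0, p x0) \<in> G"

lemma sublin_zero:
  fixes p :: "'a::real_vector \<Rightarrow> real"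
  assumes sub: "\<And>x y. p (x+y) \<le> p x + p y" and hom: "\<And>c x. c > 0 \<Longrightarrow> p (c *\<^sub>R x) \<le> c * p x"
  shows "p 0 = 0"
proof -
  have "p 0 \<le> p 0 + p 0" using sub[of 0 0] by simp
  moreover have "p 0 \<le> (1/2) * p 0" using hom[of "1/2" 0] by simp
  ultimately show ?thesis by linarith
qed

lemma sublin_hom_ge:
  fixes p :: "'a::real_vector \<Rightarrow> real"
  assumes hom: "\<And>c x. c > 0 \<Longrightarrow> p (c *\<^sub>R x) \<le> c * p x" and c: "c > 0"
  shows "c * p x \<le> p (c *\<^sub>R x)"
proof -
  have "p x \<le> (1/c) * p (c *\<^sub>R x)" using hom[of "1/c" "c *\<^sub>R x"] c by simp
  then show ?thesis using c by (simp add: field_simps)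
qed

lemma hb_base:
  fixes p :: "'a::real_vector \<Rightarrow> real"
  assumes sub: "\<And>x y. p (x+y) \<le> p x + p y" and hom: "\<And>c x. c > 0 \<Longrightarrow> p (c *\<^sub>R x) \<le> c * p x"
  shows "hb_ok p x0 {(c *\<^sub>R x0, c * p x0) | c. True}"
proof -
  have p0: "p 0 = 0" using sublin_zero[OF sub hom] .
  have dom: "c * p x0 \<le> p (c *\<^sub>R x0)" for c
  proof (cases "c > 0")
    case True then show ?thesis using sublin_hom_ge[OF hom] by blast
  next
    case False
    show ?thesis
    proof (cases "c = 0")
      case True then show ?thesis using p0 by simp
    next
      case False
      with \<open>\<not> c > 0\<close> have d: "-c > 0" by simp
      have "p 0 \<le> p x0 + p (-x0)" using sub[of x0 "-x0"] by simp
      hence "- p x0 \<le> p (-x0)" using p0 by simp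
      hence "(-c) * (- p x0) \<le> (-c) * p (-x0)" using d by (intro mult_left_mono) auto
      also have "\<dots> \<le> p ((-c) *\<^sub>R (-x0))" using sublin_hom_ge[OF hom d] .
      finally show ?thesis by simp
    qed
  qed
  show ?thesis unfolding hb_ok_def
  proof (intro conjI allI impI)
    fix x a b assume "(x,a) \<in> {(c *\<^sub>R x0, c * p x0) | c. True}" "(x,b) \<in> {(c *\<^sub>R x0, c * p x0) | c. True}"
    then obtain c d where cd: "x = c *\<^sub>R x0" "a = c * p x0" "x = d *\<^sub>R x0" "b = d * p x0" by blast
    show "a = b"
    proof (cases "x0 = 0")
      case True then show ?thesis using cd p0 by simp
    next
      case False
      from cd have "c *\<^sub>R x0 = d *\<^sub>R x0" by metis
      with False have "c = d" by simp
      then show ?thesis using cd by simp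
    qed
  next
    fix x a y b assume "(x,a) \<in> {(c *\<^sub>R x0, c * p x0) | c. True}" "(y,b) \<in> {(c *\<^sub>R x0, c * p x0) | c. True}"
    then obtain c d where cd: "x = c *\<^sub>R x0" "a = c * p x0" "y = d *\<^sub>R x0" "b = d * p x0" by auto
    show "(x+y, a+b) \<in> {(c *\<^sub>R x0, c * p x0) | c. True}"
      by (rule CollectI, rule exI[of _ "c+d"]) (simp add: cd algebra_simps)
  next
    fix x a c assume "(x,a) \<in> {(c *\<^sub>R x0, c * p x0) | c. True}"
    then obtain d where cd: "x = d *\<^sub>R x0" "a = d * p x0" by auto
    show "(c *\<^sub>R x, c*a) \<in> {(c *\<^sub>R x0, c * p x0) | c. True}"
      by (rule CollectI, rule exI[of _ "c*d"]) (simp add: cd algebra_simps)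
  next
    fix x a assume "(x,a) \<in> {(c *\<^sub>R x0, c * p x0) | c. True}"
    then obtain d where cd: "x = d *\<^sub>R x0" "a = d * p x0" by auto
    show "a \<le> p x" using dom cd by simp
  next
    show "(x0, p x0) \<in> {(c *\<^sub>R x0, c * p x0) | c. True}"
      by (rule CollectI, rule exI[of _ 1]) simp
  qed
qed

lemma hb_okD:
  assumes "hb_ok p x0 G"
  shows "\<And>x a b. (x,a)\<in>G \<Longrightarrow> (x,b)\<in>G \<Longrightarrow> a = b"
    and "\<And>x a z b. (x,a)\<in>G \<Longrightarrow> (z,b)\<in>G \<Longrightarrow> (x+z, a+b)\<in>G"
    and "\<And>x a c. (x,a)\<in>G \<Longrightarrow> (c *\<^sub>R x, c*a) \<in> G"
    and "\<And>x a. (x,a)\<in>G \<Longrightarrow> a \<le> p x"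
    and "(x0, p x0) \<in> G"
  using assms unfolding hb_ok_def by blast+

lemma hb_chain:
  assumes C: "C \<in> chains {G. hb_ok p x0 G}" and ne: "C \<noteq> {}"
  shows "hb_ok p x0 (\<Union>C)"
proof -
  have sub: "\<And>G. G \<in> C \<Longrightarrow> hb_ok p x0 G" using C by (auto simp: chains_def)
  have ch: "\<And>G H. G \<in> C \<Longrightarrow> H \<in> C \<Longrightarrow> G \<subseteq> H \<or> H \<subseteq> G"
    using C by (auto simp: chains_def chain_subset_def)
  have two: "\<exists>G\<in>C. u \<in> G \<and> v \<in> G" if "u \<in> \<Union>C" "v \<in> \<Union>C" for u v
  proof -
    from that obtain G H where "G \<in> C" "H \<in> C" "u \<in> G" "v \<in> H" by auto
    with ch[of G H] show ?thesis by blast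
  qed
  from ne obtain G0 where "G0 \<in> C" by auto
  show ?thesis unfolding hb_ok_def
  proof (intro conjI allI impI)
    fix x a b assume "(x,a) \<in> \<Union>C" "(x,b) \<in> \<Union>C"
    with two obtain G where "G \<in> C" "(x,a) \<in> G" "(x,b) \<in> G" by blast
    with sub hb_okD(1) show "a = b" by blast
  next
    fix x a y b assume "(x,a) \<in> \<Union>C" "(y,b) \<in> \<Union>C"
    with two obtain G where "G \<in> C" "(x,a) \<in> G" "(y,b) \<in> G" by blast
    with sub hb_okD(2) have "(x+y,a+b) \<in> G" by blast
    with \<open>G \<in> C\<close> show "(x+y,a+b) \<in> \<Union>C" by blast
  next
    fix x a c assume "(x,a) \<in> \<Union>C"
    then obtain G where "G \<in> C" "(x,a) \<in> G" by blast
    with sub hb_okD(3) have "(c *\<^sub>R x, c*a) \<in> G" by blast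
    with \<open>G \<in> C\<close> show "(c *\<^sub>R x, c*a) \<in> \<Union>C" by blast
  next
    fix x a assume "(x,a) \<in> \<Union>C"
    then obtain G where "G \<in> C" "(x,a) \<in> G" by blast
    with sub hb_okD(4) show "a \<le> p x" by blast
  next
    show "(x0, p x0) \<in> \<Union>C" using hb_okD(5)[OF sub[OF \<open>G0 \<in> C\<close>]] \<open>G0 \<in> C\<close> by blast
  qed
qed

lemma hb_extend:
  fixes p :: "'a::real_vector \<Rightarrow> real"
  assumes sub: "\<And>x y. p (x+y) \<le> p x + p y" and hom: "\<And>c x. c > 0 \<Longrightarrow> p (c *\<^sub>R x) \<le> c * p x"
    and G: "hb_ok p x0 G" and y: "\<forall>a. (y,a) \<notin> G"
  shows "\<exists>G'. hb_ok p x0 G' \<and> G \<subseteq> G' \<and> G' \<noteq> G"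
proof -
  note fn = hb_okD(1)[OF G] and add = hb_okD(2)[OF G] and scl = hb_okD(3)[OF G]
    and dom = hb_okD(4)[OF G] and x0 = hb_okD(5)[OF G]
  have z0: "(0,0) \<in> G" using scl[OF x0, of 0] by simp
  define L where "L = {a - p (x - y) | x a. (x,a) \<in> G}"
  define w where "w = Sup L"
  have key: "a - p (x - y) \<le> p (z + y) - b" if "(x,a) \<in> G" "(z,b) \<in> G" for x a z b
  proof -
    have "a + b \<le> p (x + z)" using dom[OF add[OF that]] .
    also have "\<dots> = p ((x - y) + (z + y))" by (simp add: algebra_simps)
    also have "\<dots> \<le> p (x - y) + p (z + y)" by (rule sub)
    finally show ?thesis by simp
  qed
  have Lne: "L \<noteq> {}" using z0 unfolding L_def by blast
  have Lbdd: "bdd_above L" unfolding L_def bdd_above_def using key[OF _ z0] by auto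
  have wl: "a - p (x - y) \<le> w" if "(x,a) \<in> G" for x a
    unfolding w_def by (rule cSup_upper[OF _ Lbdd]) (use that L_def in blast)
  have wu: "w \<le> p (z + y) - b" if "(z,b) \<in> G" for z b
    unfolding w_def by (rule cSup_least[OF Lne]) (use key[OF _ that] L_def in blast)
  define G' where "G' = {(x + c *\<^sub>R y, a + c * w) | x a c. (x,a) \<in> G}"
  have memG': "(x + c *\<^sub>R y, a + c * w) \<in> G'" if "(x,a) \<in> G" for x a c
    using that unfolding G'_def by blast
  have dom': "a + c * w \<le> p (x + c *\<^sub>R y)" if xa: "(x,a) \<in> G" for x a c
  proof (cases "c > 0")
    case True
    have "(inverse c *\<^sub>R x, inverse c * a) \<in> G" by (rule scl[OF xa])
    from wu[OF this] have "w \<le> p (inverse c *\<^sub>R x + y) - inverse c * a" .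
    moreover have "p (inverse c *\<^sub>R x + y) = p (inverse c *\<^sub>R (x + c *\<^sub>R y))"
      using True by (simp add: algebra_simps)
    moreover have "p (inverse c *\<^sub>R (x + c *\<^sub>R y)) \<le> inverse c * p (x + c *\<^sub>R y)"
      using hom True by simp
    ultimately have "w \<le> inverse c * p (x + c *\<^sub>R y) - inverse c * a" by linarith
    hence "c * w \<le> c * (inverse c * p (x + c *\<^sub>R y) - inverse c * a)"
      using True by (simp add: mult_left_mono)
    also have "\<dots> = p (x + c *\<^sub>R y) - a" using True by (simp add: algebra_simps)
    finally show ?thesis by simp
  next
    case False
    show ?thesis
    proof (cases "c = 0")
      case True then show ?thesis using dom[OF xa] by simp
    next
      case False
      with \<open>\<not> c > 0\<close> have d: "-c > 0" by simp
      define d where "d = -c"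
      have dpos: "d > 0" using d d_def by simp
      have "(inverse d *\<^sub>R x, inverse d * a) \<in> G" by (rule scl[OF xa])
      from wl[OF this] have "inverse d * a - p (inverse d *\<^sub>R x - y) \<le> w" .
      moreover have "p (inverse d *\<^sub>R x - y) = p (inverse d *\<^sub>R (x + c *\<^sub>R y))"
      proof -
        have "inverse d *\<^sub>R (c *\<^sub>R y) = - y" using dpos d_def by simp
        hence "inverse d *\<^sub>R (x + c *\<^sub>R y) = inverse d *\<^sub>R x - y" by (simp add: scaleR_add_right)
        thus ?thesis by simp
      qed
      moreover have "p (inverse d *\<^sub>R (x + c *\<^sub>R y)) \<le> inverse d * p (x + c *\<^sub>R y)"
        using hom dpos by simp
      ultimately have "inverse d * a - inverse d * p (x + c *\<^sub>R y) \<le> w" by linarith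
      hence "d * (inverse d * a - inverse d * p (x + c *\<^sub>R y)) \<le> d * w"
        using dpos by (simp add: mult_left_mono)
      moreover have "d * (inverse d * a - inverse d * p (x + c *\<^sub>R y)) = a - p (x + c *\<^sub>R y)"
        using dpos by (simp add: field_simps)
      ultimately have "a - p (x + c *\<^sub>R y) \<le> d * w" by linarith
      then show ?thesis by (simp add: d_def)
    qed
  qed
  have "hb_ok p x0 G'" unfolding hb_ok_def
  proof (intro conjI allI impI)
    fix u a b assume "(u,a) \<in> G'" "(u,b) \<in> G'"
    then obtain x1 a1 c1 x2 a2 c2 where e: "u = x1 + c1 *\<^sub>R y" "a = a1 + c1 * w" "(x1,a1) \<in> G"
       "u = x2 + c2 *\<^sub>R y" "b = a2 + c2 * w" "(x2,a2) \<in> G" unfolding G'_def by blast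
    have "c1 = c2"
    proof (rule ccontr)
      assume ne: "c1 \<noteq> c2"
      have "(x2 + (-1) *\<^sub>R x1, a2 + (-1) * a1) \<in> G" by (rule add[OF e(6) scl[OF e(3)]])
      hence "(inverse (c1 - c2) *\<^sub>R (x2 + (-1) *\<^sub>R x1), inverse (c1 - c2) * (a2 + (-1) * a1)) \<in> G"
        by (rule scl)
      moreover have "inverse (c1 - c2) *\<^sub>R (x2 + (-1) *\<^sub>R x1) = y"
      proof -
        have "x2 - x1 = (c1 - c2) *\<^sub>R y" using e(1) e(4) by (simp add: algebra_simps)
        thus ?thesis using ne by simp
      qed
      ultimately show False using y by simp
    qed
    with e have "x1 = x2" by simp
    with e \<open>c1 = c2\<close> fn show "a = b" by blast
  next
    fix u a v b assume "(u,a) \<in> G'" "(v,b) \<in> G'"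
    then obtain x1 a1 c1 x2 a2 c2 where e: "u = x1 + c1 *\<^sub>R y" "a = a1 + c1 * w" "(x1,a1) \<in> G"
       "v = x2 + c2 *\<^sub>R y" "b = a2 + c2 * w" "(x2,a2) \<in> G" unfolding G'_def by blast
    have "(x1 + x2 + (c1 + c2) *\<^sub>R y, a1 + a2 + (c1 + c2) * w) \<in> G'"
      by (rule memG'[OF add[OF e(3) e(6)]])
    moreover have "x1 + x2 + (c1 + c2) *\<^sub>R y = u + v" "a1 + a2 + (c1 + c2) * w = a + b"
      using e by (simp_all add: algebra_simps)
    ultimately show "(u+v, a+b) \<in> G'" by simp
  next
    fix u a c assume "(u,a) \<in> G'"
    then obtain x1 a1 c1 where e: "u = x1 + c1 *\<^sub>R y" "a = a1 + c1 * w" "(x1,a1) \<in> G"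
      unfolding G'_def by blast
    have "(c *\<^sub>R x1 + (c * c1) *\<^sub>R y, c * a1 + (c * c1) * w) \<in> G'"
      by (rule memG'[OF scl[OF e(3)]])
    moreover have "c *\<^sub>R x1 + (c * c1) *\<^sub>R y = c *\<^sub>R u" "c * a1 + (c * c1) * w = c * a"
      using e by (simp_all add: algebra_simps)
    ultimately show "(c *\<^sub>R u, c * a) \<in> G'" by simp
  next
    fix u a assume "(u,a) \<in> G'"
    then obtain x1 a1 c1 where e: "u = x1 + c1 *\<^sub>R y" "a = a1 + c1 * w" "(x1,a1) \<in> G"
      unfolding G'_def by blast
    show "a \<le> p u" using dom'[OF e(3)] e by simp
  next
    show "(x0, p x0) \<in> G'" using memG'[OF x0, of 0] by simp
  qed
  moreover have "G \<subseteq> G'" using memG'[of _ _ 0] by auto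
  moreover have "(y, w) \<in> G'" using memG'[OF z0, of 1] by simp
  ultimately show ?thesis using y by blast
qed

lemma hahn_banach:
  fixes p :: "'a::real_vector \<Rightarrow> real"
  assumes sub: "\<And>x y. p (x+y) \<le> p x + p y" and hom: "\<And>c x. c > 0 \<Longrightarrow> p (c *\<^sub>R x) \<le> c * p x"
  shows "\<exists>f. linear f \<and> (\<forall>x. f x \<le> p x) \<and> f x0 = p x0"
proof -
  have "\<exists>M\<in>{G. hb_ok p x0 G}. \<forall>X\<in>{G. hb_ok p x0 G}. M \<subseteq> X \<longrightarrow> X = M"
  proof (rule Zorn_Lemma2, rule ballI)
    fix C assume C: "C \<in> chains {G. hb_ok p x0 G}"
    show "\<exists>U\<in>{G. hb_ok p x0 G}. \<forall>X\<in>C. X \<subseteq> U"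
    proof (cases "C = {}")
      case True then show ?thesis using hb_base[OF sub hom, of x0] by blast
    next
      case False then show ?thesis using hb_chain[OF C False] by blast
    qed
  qed
  then obtain M where M: "hb_ok p x0 M" and max: "\<And>X. hb_ok p x0 X \<Longrightarrow> M \<subseteq> X \<Longrightarrow> X = M" by blast
  note Mfn = hb_okD(1)[OF M] and Madd = hb_okD(2)[OF M] and Mscl = hb_okD(3)[OF M]
    and Mdom = hb_okD(4)[OF M] and Mx0 = hb_okD(5)[OF M]
  have tot: "\<exists>a. (y,a) \<in> M" for y
    using hb_extend[OF sub hom M, of y] max by blast
  define f where "f y = (THE a. (y,a) \<in> M)" for y
  have fM: "(y, f y) \<in> M" for y
  proof -
    obtain a where a: "(y,a) \<in> M" using tot by blast
    have "(THE a. (y,a) \<in> M) = a" by (rule the_equality) (use Mfn a in blast)+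
    thus ?thesis using a f_def by simp
  qed
  have fv: "(y,a) \<in> M \<Longrightarrow> f y = a" for y a using fM Mfn by blast
  have "linear f"
  proof (rule linearI)
    fix b1 b2 show "f (b1 + b2) = f b1 + f b2" by (rule fv, rule Madd) (rule fM)+
  next
    fix r b show "f (r *\<^sub>R b) = r *\<^sub>R f b" using fv[OF Mscl[OF fM]] by simp
  qed
  moreover have "\<forall>x. f x \<le> p x" using Mdom fM by blast
  moreover have "f x0 = p x0" using fv Mx0 by blast
  ultimately show ?thesis by blast
qed



lemma lc_scal_cont:
  assumes "lc_hausdorff_topology T"
  shows "continuous_map T T (\<lambda>z. c *\<^sub>R z)"
proof -
  have tu: "topspace T = UNIV" and sc: "continuous_map (prod_topology euclideanreal T) T (\<lambda>(c, x). c *\<^sub>R x)"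
    using assms unfolding lc_hausdorff_topology_def by auto
  have "continuous_map T (prod_topology euclideanreal T) (\<lambda>z. (c, z))"
    by (intro continuous_map_pairedI continuous_map_const[THEN iffD2] continuous_map_id[unfolded id_def]) simp
  from continuous_map_compose[OF this sc] show ?thesis by (simp add: o_def)
qed

lemma lc_transl_cont:
  assumes "lc_hausdorff_topology T"
  shows "continuous_map T T (\<lambda>z. z + c)"
proof -
  have tu: "topspace T = UNIV" and sc: "continuous_map (prod_topology T T) T (\<lambda>(x, y). x + y)"
    using assms unfolding lc_hausdorff_topology_def by auto
  have "continuous_map T (prod_topology T T) (\<lambda>z. (z, c))"
    by (intro continuous_map_pairedI continuous_map_const[THEN iffD2] continuous_map_id[unfolded id_def]) (simp add: tu)
  from continuous_map_compose[OF this sc] show ?thesis by (simp add: o_def)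
qed

lemma lc_path_cont:
  assumes "lc_hausdorff_topology T"
  shows "continuous_map euclideanreal T (\<lambda>c. c *\<^sub>R z)"
proof -
  have tu: "topspace T = UNIV" and sc: "continuous_map (prod_topology euclideanreal T) T (\<lambda>(c, x). c *\<^sub>R x)"
    using assms unfolding lc_hausdorff_topology_def by auto
  have "continuous_map euclideanreal (prod_topology euclideanreal T) (\<lambda>c. (c, z))"
    by (intro continuous_map_pairedI continuous_map_const[THEN iffD2] continuous_map_id[unfolded id_def]) (simp add: tu)
  from continuous_map_compose[OF this sc] show ?thesis by (simp add: o_def)
qed

lemma lc_open_preimage:
  assumes "continuous_map T T g" "openin T U" "lc_hausdorff_topology T"
  shows "openin T {z. g z \<in> U}"
proof -
  have tu: "topspace T = UNIV" using assms unfolding lc_hausdorff_topology_def by auto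
  show ?thesis using openin_continuous_map_preimage[OF assms(1,2)] by (simp add: tu)
qed

lemma aux_abs: "(e::real) > 0 \<Longrightarrow> \<bar>(2/e) * d\<bar> \<le> 1 \<Longrightarrow> \<bar>d\<bar> \<le> e/2"
  by (simp add: abs_mult field_simps)

lemma lc_sep:
  fixes T :: "'a::real_vector topology"
  assumes lc: "lc_hausdorff_topology T" and x: "x \<noteq> 0"
  shows "\<exists>f\<in>tau_dual T. f x \<noteq> 0"
proof -
  have tu: "topspace T = UNIV" and hs: "Hausdorff_space T"
    and lcv: "\<And>U. openin T U \<Longrightarrow> 0 \<in> U \<Longrightarrow> \<exists>V. openin T V \<and> convex V \<and> 0 \<in> V \<and> V \<subseteq> U"
    using lc unfolding lc_hausdorff_topology_def by auto
  obtain U U' where U: "openin T U" "openin T U'" "0 \<in> U" "x \<in> U'" "disjnt U U'"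
    using hs x unfolding Hausdorff_space_def tu by (metis UNIV_I)
  have xU: "x \<notin> U" using U by (auto simp: disjnt_def)
  obtain V where V: "openin T V" "convex V" "0 \<in> V" "V \<subseteq> U" using lcv[OF U(1) U(3)] by blast
  define W where "W = {z. z \<in> V \<and> -z \<in> V}"
  have Wo: "openin T W"
  proof -
    have "openin T {z. (-1) *\<^sub>R z \<in> V}" by (rule lc_open_preimage[OF lc_scal_cont[OF lc] V(1) lc])
    hence "openin T (V \<inter> {z. (-1) *\<^sub>R z \<in> V})" using V(1) by blast
    moreover have "V \<inter> {z. (-1) *\<^sub>R z \<in> V} = W" unfolding W_def by auto
    ultimately show ?thesis by simp
  qed
  have Wc: "convex W" unfolding W_def convex_def
  proof (intro allI impI ballI, elim CollectE conjE, intro CollectI conjI)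
    fix u v :: 'a and a b :: real assume h: "u \<in> V" "-u \<in> V" "v \<in> V" "-v \<in> V" "0 \<le> a" "0 \<le> b" "a + b = 1"
    show "a *\<^sub>R u + b *\<^sub>R v \<in> V" using V(2) h unfolding convex_def by blast
    have "a *\<^sub>R (-u) + b *\<^sub>R (-v) \<in> V" using V(2) h unfolding convex_def by blast
    thus "- (a *\<^sub>R u + b *\<^sub>R v) \<in> V" by (simp add: algebra_simps)
  qed
  have W0: "0 \<in> W" using V unfolding W_def by simp
  have WU: "W \<subseteq> U" using V unfolding W_def by auto
  have Wneg: "z \<in> W \<Longrightarrow> -z \<in> W" for z unfolding W_def by simp
  have Wseg: "r *\<^sub>R z \<in> W" if "z \<in> W" "0 \<le> r" "r \<le> 1" for z r
  proof -
    have "r *\<^sub>R z + (1 - r) *\<^sub>R 0 \<in> W" by (rule convexD[OF Wc that(1) W0]) (use that in auto)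
    thus ?thesis by simp
  qed
  have absorb: "\<exists>c>0. c *\<^sub>R z \<in> W" for z
  proof -
    have "openin euclideanreal {c. c *\<^sub>R z \<in> W}"
      using openin_continuous_map_preimage[OF lc_path_cont[OF lc] Wo] by simp
    hence "open {c. c *\<^sub>R z \<in> W}" by simp
    moreover have "(0::real) \<in> {c. c *\<^sub>R z \<in> W}" using W0 by simp
    ultimately obtain e where e: "e > 0" "ball 0 e \<subseteq> {c::real. c *\<^sub>R z \<in> W}"
      using open_contains_ball by blast
    have "(e/2) \<in> ball 0 e" using e by simp
    with e have "(e/2) *\<^sub>R z \<in> W" by blast
    with e show ?thesis by (intro exI[of _ "e/2"]) auto
  qed
  define R where "R z = {r::real. r > 0 \<and> inverse r *\<^sub>R z \<in> W}" for z
  define p where "p z = Inf (R z)" for z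
  have Rne: "R z \<noteq> {}" for z
  proof -
    obtain c where c: "c > 0" "c *\<^sub>R z \<in> W" using absorb by blast
    hence "inverse c \<in> R z" unfolding R_def by simp
    thus ?thesis by blast
  qed
  have Rbdd: "bdd_below (R z)" for z unfolding R_def bdd_below_def by (rule exI[of _ 0]) auto
  have pR: "p z \<le> r" if "r \<in> R z" for z r unfolding p_def by (rule cInf_lower[OF that Rbdd])
  have pW: "p z \<le> 1" if "z \<in> W" for z using pR[of 1 z] that unfolding R_def by simp
  have p1: "z \<in> W" if lt: "p z < 1" for z
  proof -
    obtain r where r: "r \<in> R z" "r < 1" using lt cInf_lessD[OF Rne] unfolding p_def by blast
    hence "r *\<^sub>R (inverse r *\<^sub>R z) \<in> W" using Wseg[of "inverse r *\<^sub>R z" r] unfolding R_def by auto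
    thus ?thesis using r unfolding R_def by simp
  qed
  have hom: "p (c *\<^sub>R z) \<le> c * p z" if c: "c > 0" for c z
  proof -
    have "p (c *\<^sub>R z) / c \<le> p z" unfolding p_def[of z]
    proof (rule cInf_greatest[OF Rne])
      fix r assume r: "r \<in> R z"
      have eq: "inverse (c * r) *\<^sub>R (c *\<^sub>R z) = inverse r *\<^sub>R z" using c by simp
      have r': "r > 0" "inverse r *\<^sub>R z \<in> W" using r unfolding R_def by auto
      have "c * r \<in> R (c *\<^sub>R z)" unfolding R_def mem_Collect_eq eq using c r' by (simp add: mult_pos_pos)
      hence "p (c *\<^sub>R z) \<le> c * r" by (rule pR)
      thus "p (c *\<^sub>R z) / c \<le> r" using c by (simp add: field_simps)
    qed
    thus ?thesis using c by (simp add: field_simps)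
  qed
  have sub: "p (u + v) \<le> p u + p v" for u v
  proof -
    have A: "p (u + v) - s \<le> r" if r: "r \<in> R u" and s: "s \<in> R v" for r s
    proof -
      have rs: "r > 0" "s > 0" "inverse r *\<^sub>R u \<in> W" "inverse s *\<^sub>R v \<in> W" using r s unfolding R_def by auto
      have "(r / (r+s)) *\<^sub>R (inverse r *\<^sub>R u) + (s / (r+s)) *\<^sub>R (inverse s *\<^sub>R v) \<in> W"
        by (rule convexD[OF Wc rs(3) rs(4)]) (use rs in \<open>auto simp: add_divide_distrib[symmetric]\<close>)
      moreover have "(r / (r+s)) *\<^sub>R (inverse r *\<^sub>R u) + (s / (r+s)) *\<^sub>R (inverse s *\<^sub>R v) = inverse (r+s) *\<^sub>R (u + v)"
      proof -
        have e: "r / (r + s) * inverse r = inverse (r+s)" "s / (r + s) * inverse s = inverse (r+s)"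
          using rs by (simp_all add: field_simps)
        show ?thesis by (simp only: scaleR_scaleR e scaleR_add_right)
      qed
      ultimately have "r + s \<in> R (u + v)" using rs unfolding R_def by simp
      from pR[OF this] show ?thesis by simp
    qed
    have B: "p (u + v) - s \<le> p u" if s: "s \<in> R v" for s
      unfolding p_def[of u] by (rule cInf_greatest[OF Rne]) (rule A[OF _ s])
    have "p (u + v) - p u \<le> p v"
      unfolding p_def[of v] by (rule cInf_greatest[OF Rne]) (use B in fastforce)
    thus ?thesis by simp
  qed
  obtain f where f: "linear f" "\<And>z. f z \<le> p z" "f x = p x"
    using hahn_banach[of p x, OF sub hom] by blast
  have px: "p x \<ge> 1" using p1 xU WU by force
  have fW: "\<bar>f z\<bar> \<le> 1" if "z \<in> W" for z
  proof -
    have "f z \<le> 1" using f(2)[of z] pW[OF that] by simp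
    moreover have "f (-z) \<le> 1" using f(2)[of "-z"] pW[OF Wneg[OF that]] by simp
    moreover have "f (-z) = - f z" using linear_neg[OF f(1)] .
    ultimately show ?thesis by simp
  qed
  have cont: "continuous_map T euclideanreal f"
    unfolding continuous_map_def
  proof (intro conjI allI impI)
    show "f \<in> topspace T \<rightarrow> topspace euclideanreal" by simp
  next
    fix Op :: "real set" assume "openin euclideanreal Op"
    hence oO: "open Op" by simp
    show "openin T {z \<in> topspace T. f z \<in> Op}"
    proof (subst openin_subopen, intro ballI)
      fix z0 assume "z0 \<in> {z \<in> topspace T. f z \<in> Op}"
      hence "f z0 \<in> Op" by simp
      then obtain e where e: "e > 0" "ball (f z0) e \<subseteq> Op" using oO open_contains_ball by blast
      define N where "N = {u. (2/e) *\<^sub>R (u + (- z0)) \<in> W}"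
      have cN: "continuous_map T T (\<lambda>u. (2/e) *\<^sub>R (u + (- z0)))"
        using continuous_map_compose[OF lc_transl_cont[OF lc, of "-z0"] lc_scal_cont[OF lc, of "2/e"]]
        by (simp add: o_def)
      have "openin T N" unfolding N_def by (rule lc_open_preimage[OF cN Wo lc])
      moreover have "z0 \<in> N" unfolding N_def using W0 by simp
      moreover have "N \<subseteq> {z \<in> topspace T. f z \<in> Op}"
      proof
        fix u assume "u \<in> N"
        hence "\<bar>f ((2/e) *\<^sub>R (u + (- z0)))\<bar> \<le> 1" using fW unfolding N_def by blast
        moreover have "f ((2/e) *\<^sub>R (u + (- z0))) = (2/e) * (f u - f z0)"
          using f(1) by (simp add: linear_scale linear_add linear_neg linear_diff diff_divide_distrib)
        ultimately have "\<bar>(2/e) * (f u - f z0)\<bar> \<le> 1" by simp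
        hence "\<bar>f u - f z0\<bar> \<le> e/2" using e aux_abs by blast
        hence "f u \<in> ball (f z0) e" using e by (simp add: dist_real_def abs_minus_commute)
        thus "u \<in> {z \<in> topspace T. f z \<in> Op}" using e tu by auto
      qed
      ultimately show "\<exists>N. openin T N \<and> z0 \<in> N \<and> N \<subseteq> {z \<in> topspace T. f z \<in> Op}" by blast
    qed
  qed
  have "f \<in> tau_dual T" unfolding tau_dual_def using f(1) cont by simp
  moreover have "f x \<noteq> 0" using f(3) px by simp
  ultimately show ?thesis by blast
qed



lemma add_inf_le:
  fixes c x y :: "'a::{ordered_real_vector,lattice}"
  shows "inf (c + x) (c + y) \<le> c + inf x y"
proof -
  have "inf (c + x) (c + y) - c \<le> x" using inf_le1[of "c+x" "c+y"] by (simp add: diff_le_eq add.commute)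
  moreover have "inf (c + x) (c + y) - c \<le> y" using inf_le2[of "c+x" "c+y"] by (simp add: diff_le_eq add.commute)
  ultimately have "inf (c + x) (c + y) - c \<le> inf x y" by simp
  hence "inf (c + x) (c + y) \<le> inf x y + c" by (metis diff_le_eq)
  thus ?thesis by (simp add: add.commute)
qed

lemma riesz_decomp:
  fixes a p q :: "'a::{ordered_real_vector,lattice}"
  assumes "0 \<le> a" "a \<le> p + q" "0 \<le> p" "0 \<le> q"
  shows "\<exists>u v. 0 \<le> u \<and> u \<le> p \<and> 0 \<le> v \<and> v \<le> q \<and> a = u + v"
proof (intro exI conjI)
  show "0 \<le> inf a p" using assms by simp
  show "inf a p \<le> p" by simp
  show "0 \<le> a - inf a p" by simp
  have "a \<le> q + a" using assms by simp
  moreover have "a \<le> q + p" using assms by (simp add: add.commute)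
  ultimately have "a \<le> inf (q + a) (q + p)" by simp
  also have "\<dots> \<le> q + inf a p" by (rule add_inf_le)
  finally show "a - inf a p \<le> q" by (simp add: diff_le_eq)
  show "a = inf a p + (a - inf a p)" by simp
qed

lemma extreme_split:
  assumes "a extreme_point_of A" "y \<in> A" "z \<in> A" "0 < t" "t < 1" "a = (1 - t) *\<^sub>R y + t *\<^sub>R z"
  shows "y = a \<and> z = a"
proof (cases "y = z")
  case True
  then have "a = y" using assms(6) by (simp add: scaleR_left_diff_distrib[symmetric] algebra_simps)
  then show ?thesis using True by simp
next
  case False
  then have "a \<in> open_segment y z" using assms(4-6) unfolding in_segment by blast
  then show ?thesis using assms(1-3) unfolding extreme_point_of_def by blast
qed

lemma below_combo:
  fixes A :: "'a::{ordered_real_vector,lattice} set"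
  assumes ps: "positive_solid A" and ext: "a extreme_point_of A"
    and x0: "x0 \<in> A" and x1: "x1 \<in> A" and t: "0 < t" "t < 1"
    and le: "a \<le> (1 - t) *\<^sub>R x0 + t *\<^sub>R x1"
  shows "a \<le> x0 \<and> a \<le> x1"
proof -
  have pos: "\<And>z. z \<in> A \<Longrightarrow> 0 \<le> z" and sol: "\<And>x z. 0 \<le> x \<Longrightarrow> z \<in> A \<Longrightarrow> x \<le> z \<Longrightarrow> x \<in> A"
    using ps unfolding positive_solid_def by auto
  have aA: "a \<in> A" using ext unfolding extreme_point_of_def by simp
  have p0: "0 \<le> (1 - t) *\<^sub>R x0" using pos[OF x0] t by (intro scaleR_nonneg_nonneg) auto
  have q0: "0 \<le> t *\<^sub>R x1" using pos[OF x1] t by (intro scaleR_nonneg_nonneg) auto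
  obtain u v where uv: "0 \<le> u" "u \<le> (1 - t) *\<^sub>R x0" "0 \<le> v" "v \<le> t *\<^sub>R x1" "a = u + v"
    using riesz_decomp[OF pos[OF aA] le p0 q0] by blast
  define u0 where "u0 = inverse (1 - t) *\<^sub>R u"
  define v1 where "v1 = inverse t *\<^sub>R v"
  have "u0 \<le> inverse (1 - t) *\<^sub>R ((1 - t) *\<^sub>R x0)" unfolding u0_def
    by (rule scaleR_left_mono[OF uv(2)]) (use t in simp)
  hence u0x: "u0 \<le> x0" using t by simp
  have "v1 \<le> inverse t *\<^sub>R (t *\<^sub>R x1)" unfolding v1_def
    by (rule scaleR_left_mono[OF uv(4)]) (use t in simp)
  hence v1x: "v1 \<le> x1" using t by simp
  have u00: "0 \<le> u0" unfolding u0_def using uv(1) t by (intro scaleR_nonneg_nonneg) auto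
  have v10: "0 \<le> v1" unfolding v1_def using uv(3) t by (intro scaleR_nonneg_nonneg) auto
  have u0A: "u0 \<in> A" by (rule sol[OF u00 x0 u0x])
  have v1A: "v1 \<in> A" by (rule sol[OF v10 x1 v1x])
  have "a = (1 - t) *\<^sub>R u0 + t *\<^sub>R v1" unfolding u0_def v1_def using uv(5) t by simp
  from extreme_split[OF ext u0A v1A t this] have "u0 = a" "v1 = a" by auto
  thus ?thesis using u0x v1x by simp
qed

lemma aux_combo:
  fixes t a b m :: real
  assumes "0 < t" "t < 1" "m \<le> (1 - t) * a + t * b" "a \<le> m" "b \<le> m"
  shows "a = m" "b = m"
proof -
  have A: "0 \<le> (1-t)*(m-a)" "0 \<le> t*(m-b)" using assms by auto
  have B: "(1-t)*(m-a) + t*(m-b) \<le> 0" using assms(3) by (simp add: algebra_simps)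
  hence e: "(1-t)*(m-a) = 0" "t*(m-b) = 0" using A by linarith+
  show "a = m" using e(1) assms by simp
  show "b = m" using e(2) assms by simp
qed

definition Eset :: "'a::{real_normed_vector,ordered_real_vector,lattice} topology \<Rightarrow> 'a set \<Rightarrow> 'a set \<Rightarrow> 'a set \<Rightarrow> bool" where
  "Eset T A F S \<longleftrightarrow> S \<noteq> {} \<and> closedin T S \<and> S \<subseteq> F \<and>
     (\<forall>s\<in>S. \<forall>p\<in>A. \<forall>q\<in>A. \<forall>t::real. 0 < t \<and> t < 1 \<and> s \<le> (1 - t) *\<^sub>R p + t *\<^sub>R q \<longrightarrow> p \<in> S \<and> q \<in> S)"

lemma EsetD:
  assumes "Eset T A F S"
  shows "S \<noteq> {}" "closedin T S" "S \<subseteq> F"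
    "\<And>s p q t. s \<in> S \<Longrightarrow> p \<in> A \<Longrightarrow> q \<in> A \<Longrightarrow> 0 < t \<Longrightarrow> t < 1 \<Longrightarrow> s \<le> (1 - t) *\<^sub>R p + t *\<^sub>R q \<Longrightarrow> p \<in> S \<and> q \<in> S"
  using assms unfolding Eset_def by blast+

lemma Eset_const:
  fixes T :: "'a::{real_normed_vector,ordered_real_vector,lattice} topology"
  assumes cA: "compactin T A" and FA: "F \<subseteq> A" and E: "Eset T A F S"
    and minS: "\<And>S'. Eset T A F S' \<Longrightarrow> S' \<subseteq> S \<Longrightarrow> S' = S"
    and g: "g \<in> tau_dual T" and gpos: "\<And>y. 0 \<le> y \<Longrightarrow> 0 \<le> g y"
    and s1: "s1 \<in> S" and s2: "s2 \<in> S"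
  shows "g s1 = g s2"
proof -
  have gl: "linear g" and gc: "continuous_map T euclideanreal g" using g unfolding tau_dual_def by auto
  note Sne = EsetD(1)[OF E] and Sc = EsetD(2)[OF E] and SF = EsetD(3)[OF E] and Sp = EsetD(4)[OF E]
  have cS: "compactin T S" by (rule closed_compactin[OF cA _ Sc]) (use SF FA in blast)
  have "compactin euclideanreal (g ` S)" by (rule image_compactin[OF cS gc])
  hence "compact (g ` S)" by simp
  then obtain m where m: "m \<in> g ` S" "\<And>r. r \<in> g ` S \<Longrightarrow> r \<le> m"
    using compact_attains_sup[of "g ` S"] Sne by blast
  define S' where "S' = {s \<in> topspace T. g s \<in> {m}} \<inter> S"
  have "closedin T {s \<in> topspace T. g s \<in> {m}}" by (rule closedin_continuous_map_preimage[OF gc]) simp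
  hence cS': "closedin T S'" unfolding S'_def using Sc by blast
  have "Eset T A F S'" unfolding Eset_def
  proof (intro conjI)
    show "S' \<noteq> {}" using m(1) closedin_subset[OF Sc] unfolding S'_def by blast
    show "closedin T S'" by (rule cS')
    show "S' \<subseteq> F" using SF unfolding S'_def by blast
    show "\<forall>s\<in>S'. \<forall>p\<in>A. \<forall>q\<in>A. \<forall>t::real. 0 < t \<and> t < 1 \<and> s \<le> (1 - t) *\<^sub>R p + t *\<^sub>R q \<longrightarrow> p \<in> S' \<and> q \<in> S'"
    proof (intro ballI allI impI)
    fix s p q and t :: real
    assume s: "s \<in> S'" and p: "p \<in> A" and q: "q \<in> A" and h: "0 < t \<and> t < 1 \<and> s \<le> (1 - t) *\<^sub>R p + t *\<^sub>R q"
    have sS: "s \<in> S" and gs: "g s = m" using s unfolding S'_def by auto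
    have pq: "p \<in> S" "q \<in> S" using Sp[OF sS p q] h by auto
    have "0 \<le> g ((1 - t) *\<^sub>R p + t *\<^sub>R q - s)" using gpos h by simp
    hence "g s \<le> (1 - t) * g p + t * g q" using gl by (simp add: linear_diff linear_add linear_scale)
    moreover have "g p \<le> m" "g q \<le> m" using m(2) pq by auto
    ultimately have "g p = m" "g q = m" using h gs by (auto intro: aux_combo)
    thus "p \<in> S' \<and> q \<in> S'" using pq closedin_subset[OF Sc] unfolding S'_def by auto
    qed
  qed
  hence "S' = S" using minS unfolding S'_def by blast
  hence "g s1 = m" "g s2 = m" using s1 s2 unfolding S'_def by auto
  thus ?thesis by simp
qed

theorem mainTheorem12:
  fixes T :: "('a::{banach,ordered_real_vector,lattice}) topology"
    and A :: "'a set"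
    and a :: 'a
  assumes "lattice_norm TYPE('a)"
    and "sufficiently_rich T"
    and "compactin T A"
    and "convex A"
    and "positive_solid A"
    and "a extreme_point_of A"
  shows "\<exists>b. order_extreme_point b A \<and> a \<le> b"
proof -
  note rich = assms(2)[unfolded sufficiently_rich_def]
  note lc = conjunct1[OF rich]
  note rk0 = conjunct1[OF conjunct2[OF rich]]
  note cpos = conjunct2[OF conjunct2[OF conjunct2[OF rich]]]
  have rk: "\<exists>h\<in>tau_dual T. \<forall>x. 0 \<le> x \<longrightarrow> bdd_above (rk_set f g x) \<and> h x = Sup (rk_set f g x)"
    if "f \<in> tau_dual T" "g \<in> tau_dual T" for f g
    using conjunct1[OF bspec[OF bspec[OF rk0 that(1)] that(2)]] .
  have tu: "topspace T = UNIV" and hs: "Hausdorff_space T" using lc unfolding lc_hausdorff_topology_def by auto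
  have cA: "compactin T A" by fact
  have Acl: "closedin T A" by (rule compactin_imp_closedin[OF hs cA])
  have aA: "a \<in> A" using assms(6) unfolding extreme_point_of_def by simp
  define F where "F = {x \<in> A. a \<le> x}"
  have FA: "F \<subseteq> A" unfolding F_def by auto
  have "closedin T {x \<in> topspace T. x + (- a) \<in> {x. 0 \<le> x}}"
    by (rule closedin_continuous_map_preimage[OF lc_transl_cont[OF lc] cpos])
  moreover have "{x \<in> topspace T. x + (- a) \<in> {x. 0 \<le> x}} = {x. a \<le> x}" by (auto simp: tu)
  ultimately have "closedin T {x. a \<le> x}" by simp
  moreover have "F = A \<inter> {x. a \<le> x}" unfolding F_def by blast
  ultimately have Fcl: "closedin T F" using Acl by (simp add: closedin_Int)
  have EF: "Eset T A F F" unfolding Eset_def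
  proof (intro conjI)
    show "F \<noteq> {}" using aA unfolding F_def by auto
    show "closedin T F" by (rule Fcl)
    show "F \<subseteq> F" by simp
    show "\<forall>s\<in>F. \<forall>p\<in>A. \<forall>q\<in>A. \<forall>t::real. 0 < t \<and> t < 1 \<and> s \<le> (1 - t) *\<^sub>R p + t *\<^sub>R q \<longrightarrow> p \<in> F \<and> q \<in> F"
    proof (intro ballI allI impI)
      fix s p q and t :: real assume s: "s \<in> F" and p: "p \<in> A" and q: "q \<in> A"
        and h: "0 < t \<and> t < 1 \<and> s \<le> (1 - t) *\<^sub>R p + t *\<^sub>R q"
      have "a \<le> (1 - t) *\<^sub>R p + t *\<^sub>R q" using s h unfolding F_def by auto
      from below_combo[OF assms(5) assms(6) p q _ _ this] h have "a \<le> p" "a \<le> q" by auto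
      thus "p \<in> F \<and> q \<in> F" using p q unfolding F_def by auto
    qed
  qed
  define Fam where "Fam = uminus ` {S. Eset T A F S}"
  have "\<exists>M\<in>Fam. \<forall>X\<in>Fam. M \<subseteq> X \<longrightarrow> X = M"
  proof (rule Zorn_Lemma2, rule ballI)
    fix C assume C: "C \<in> chains Fam"
    show "\<exists>U\<in>Fam. \<forall>X\<in>C. X \<subseteq> U"
    proof (cases "C = {}")
      case True then show ?thesis using EF unfolding Fam_def by blast
    next
      case False
      define D where "D = uminus ` C"
      have DE: "\<And>S. S \<in> D \<Longrightarrow> Eset T A F S" using C unfolding D_def Fam_def chains_def by auto
      have Dch: "\<And>S S'. S \<in> D \<Longrightarrow> S' \<in> D \<Longrightarrow> S \<subseteq> S' \<or> S' \<subseteq> S"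
        using C unfolding D_def chains_def chain_subset_def by auto
      have Dne: "D \<noteq> {}" using False unfolding D_def by auto
      have Dcl: "\<And>S. S \<in> D \<Longrightarrow> closedin T S" using DE EsetD(2) by blast
      have DF: "\<And>S. S \<in> D \<Longrightarrow> S \<subseteq> F" using DE EsetD(3) by blast
      have fin: "A \<inter> \<Inter>\<F> \<noteq> {}" if "finite \<F>" "\<F> \<subseteq> D" for \<F>
      proof (cases "\<F> = {}")
        case True then show ?thesis using aA by auto
      next
        case False
        have "subset.chain UNIV \<F>" using that Dch unfolding subset.chain_def by blast
        hence "\<Inter>\<F> \<in> \<F>" using Inter_in_chain that(1) False by blast
        hence IF: "\<Inter>\<F> \<in> D" using that by blast
        hence "\<Inter>\<F> \<noteq> {}" using DE EsetD(1) by blast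
        then show ?thesis using DF[OF IF] FA by blast
      qed
      have cfip: "\<And>\<U>. (\<forall>C\<in>\<U>. closedin T C) \<Longrightarrow> (\<forall>\<F>. finite \<F> \<and> \<F> \<subseteq> \<U> \<longrightarrow> A \<inter> \<Inter>\<F> \<noteq> {}) \<Longrightarrow> A \<inter> \<Inter>\<U> \<noteq> {}"
        using cA[unfolded compactin_fip] by blast
      have "A \<inter> \<Inter>D \<noteq> {}"
        by (rule cfip) (use Dcl fin in auto)
      hence IDne: "\<Inter>D \<noteq> {}" by blast
      have "Eset T A F (\<Inter>D)" unfolding Eset_def
      proof (intro conjI)
        show "\<Inter>D \<noteq> {}" by (rule IDne)
        show "closedin T (\<Inter>D)" using Dcl Dne by (rule closedin_Inter[rotated])
        show "\<Inter>D \<subseteq> F" using DF Dne by blast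
        show "\<forall>s\<in>\<Inter>D. \<forall>p\<in>A. \<forall>q\<in>A. \<forall>t::real. 0 < t \<and> t < 1 \<and> s \<le> (1 - t) *\<^sub>R p + t *\<^sub>R q \<longrightarrow> p \<in> \<Inter>D \<and> q \<in> \<Inter>D"
        proof (intro ballI allI impI)
          fix s p q and t :: real assume s: "s \<in> \<Inter>D" and p: "p \<in> A" and q: "q \<in> A"
            and h: "0 < t \<and> t < 1 \<and> s \<le> (1 - t) *\<^sub>R p + t *\<^sub>R q"
          have "p \<in> S \<and> q \<in> S" if S: "S \<in> D" for S
            using EsetD(4)[OF DE[OF S], of s p q t] s S p q h by blast
          thus "p \<in> \<Inter>D \<and> q \<in> \<Inter>D" by blast
        qed
      qed
      hence "- \<Inter>D \<in> Fam" unfolding Fam_def by blast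
      moreover have "\<forall>X\<in>C. X \<subseteq> - \<Inter>D" unfolding D_def by auto
      ultimately show ?thesis by blast
    qed
  qed
  then obtain S0 where S0: "Eset T A F S0" and minS0: "\<And>S'. Eset T A F S' \<Longrightarrow> S' \<subseteq> S0 \<Longrightarrow> S' = S0"
  proof -
    assume r: "\<And>S0. Eset T A F S0 \<Longrightarrow> (\<And>S'. Eset T A F S' \<Longrightarrow> S' \<subseteq> S0 \<Longrightarrow> S' = S0) \<Longrightarrow> thesis"
    obtain M where M: "M \<in> Fam" "\<And>X. X \<in> Fam \<Longrightarrow> M \<subseteq> X \<Longrightarrow> X = M" using \<open>\<exists>M\<in>Fam. _\<close> by blast
    obtain S where S: "Eset T A F S" "M = - S" using M(1) unfolding Fam_def by blast
    show thesis
    proof (rule r[OF S(1)])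
      fix S' assume "Eset T A F S'" "S' \<subseteq> S"
      hence "- S' \<in> Fam" "M \<subseteq> - S'" using S(2) unfolding Fam_def by auto
      from M(2)[OF this] S(2) show "S' = S" by simp
    qed
  qed
  have zero_dual: "(\<lambda>_. 0::real) \<in> tau_dual T" unfolding tau_dual_def
    by (simp add: linear_zero)
  have same: "f s1 = f s2" if f: "f \<in> tau_dual T" and s1: "s1 \<in> S0" and s2: "s2 \<in> S0" for f s1 s2
  proof -
    obtain h where h: "h \<in> tau_dual T" "\<And>x. 0 \<le> x \<Longrightarrow> bdd_above (rk_set f (\<lambda>_. 0) x) \<and> h x = Sup (rk_set f (\<lambda>_. 0) x)"
      using rk[OF f zero_dual] by blast
    have fl: "linear f" and fc: "continuous_map T euclideanreal f" using f unfolding tau_dual_def by auto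
    have hl: "linear h" and hc: "continuous_map T euclideanreal h" using h(1) unfolding tau_dual_def by auto
    have mem: "f y \<in> rk_set f (\<lambda>_. 0) x" if "0 \<le> y" "y \<le> x" for x y
      unfolding rk_set_def using that by auto
    have hge: "f y \<le> h x" if "0 \<le> y" "y \<le> x" for x y
    proof -
      have "0 \<le> x" using that by (rule order.trans)
      with h(2) have "bdd_above (rk_set f (\<lambda>_. 0) x)" "h x = Sup (rk_set f (\<lambda>_. 0) x)" by auto
      thus ?thesis using cSup_upper[OF mem[OF that]] by simp
    qed
    have hpos: "0 \<le> h y" if "0 \<le> y" for y using hge[of 0 y] that linear_0[OF fl] by simp
    define k where "k x = h x - f x" for x
    have kd: "k \<in> tau_dual T" unfolding tau_dual_def k_def
      using linear_compose_sub[OF hl fl] continuous_map_diff[OF hc fc] by simp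
    have kpos: "0 \<le> k y" if "0 \<le> y" for y using hge[of y y] that unfolding k_def by simp
    have "h s1 = h s2" by (rule Eset_const[OF cA FA S0 minS0 h(1) hpos s1 s2])
    moreover have "k s1 = k s2" by (rule Eset_const[OF cA FA S0 minS0 kd kpos s1 s2])
    ultimately show ?thesis unfolding k_def by simp
  qed
  have single: "s1 = s2" if "s1 \<in> S0" "s2 \<in> S0" for s1 s2
  proof (rule ccontr)
    assume "s1 \<noteq> s2"
    hence "s1 - s2 \<noteq> 0" by simp
    then obtain f where f: "f \<in> tau_dual T" "f (s1 - s2) \<noteq> 0" using lc_sep[OF lc] by blast
    have "f (s1 - s2) = f s1 - f s2" using f(1) unfolding tau_dual_def by (simp add: linear_diff)
    with f same[OF f(1) that] show False by simp
  qed
  obtain b where b: "b \<in> S0" using EsetD(1)[OF S0] by blast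
  have S0b: "S0 = {b}" using single b by blast
  have bF: "b \<in> F" using EsetD(3)[OF S0] b by blast
  have "order_extreme_point b A" unfolding order_extreme_point_def
  proof (rule conjI)
    show "b \<in> A" using bF FA by blast
  next
    show "\<forall>x0\<in>A. \<forall>x1\<in>A. \<forall>t::real. 0 < t \<and> t < 1 \<and> b \<le> (1 - t) *\<^sub>R x0 + t *\<^sub>R x1 \<longrightarrow> x0 = b \<and> x1 = b"
    proof (intro ballI allI impI)
    fix x0 x1 and t :: real assume x: "x0 \<in> A" "x1 \<in> A" and h: "0 < t \<and> t < 1 \<and> b \<le> (1 - t) *\<^sub>R x0 + t *\<^sub>R x1"
    have "x0 \<in> S0 \<and> x1 \<in> S0" using EsetD(4)[OF S0 b x] h by blast
    thus "x0 = b \<and> x1 = b" using S0b by blast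
    qed
  qed
  moreover have "a \<le> b" using bF unfolding F_def by blast
  ultimately show ?thesis by blast
qed

end
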